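(* Let $S$ be a semigroup of transformations of a finite set $\Omega$, and suppose $S$ contains a permutation group $G$ that is primitive on $\Omega$. Suppose the minimum rank of an element of $S$ is $r$, where $r>1$. Then $S$ contains no element of rank $r+1$.
   Context: The rank of a transformation $h$ is $|\Omega h|$. A permutation group is primitive if it is transitive and preserves no equivalence relation other than equality and the universal relation. *)

theory Defs
  imports Main
begin

text \<open>Transformations of the finite set Omega are modelled as functions on a finite
type 'a (Omega = UNIV). The rank of h is the size of its image.\<close>

definition rank :: "('a \<Rightarrow> 'a) \<Rightarrow> nat" where
  "rank h = card (range h)"

definition transformation_semigroup :: "('a \<Rightarrow> 'a) set \<Rightarrow> bool" where
  "transformation_semigroup S \<longleftrightarrow> (\<forall>f\<in>S. \<forall>g\<in>S. f \<circ> g \<in> S)"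

definition permutation_group :: "('a \<Rightarrow> 'a) set \<Rightarrow> bool" where
  "permutation_group G \<longleftrightarrow> id \<in> G \<and> (\<forall>g\<in>G. bij g \<and> inv g \<in> G)
     \<and> (\<forall>g\<in>G. \<forall>h\<in>G. g \<circ> h \<in> G)"

definition preserves :: "('a \<Rightarrow> 'a) set \<Rightarrow> 'a rel \<Rightarrow> bool" where
  "preserves G R \<longleftrightarrow> (\<forall>g\<in>G. \<forall>x y. (x, y) \<in> R \<longrightarrow> (g x, g y) \<in> R)"

definition transitive_group :: "('a \<Rightarrow> 'a) set \<Rightarrow> bool" where
  "transitive_group G \<longleftrightarrow> (\<forall>x y. \<exists>g\<in>G. g x = y)"

definition primitive :: "('a \<Rightarrow> 'a) set \<Rightarrow> bool" where
  "primitive G \<longleftrightarrow> transitive_group G \<and>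
     (\<forall>R. equiv UNIV R \<and> preserves G R \<longrightarrow> R = Id \<or> R = UNIV)"

end

theory Submission
  imports Defs
begin

lemma rank_comp: "rank (s \<circ> t) = card (s ` range t)"
  unfolding rank_def by (simp add: image_comp)

theorem corollary13:
  fixes S G :: "('a::finite \<Rightarrow> 'a) set" and r :: nat
  assumes "transformation_semigroup S"
    and "G \<subseteq> S" and "permutation_group G" and "primitive G"
    and "r = Min (rank ` S)"
    and "r > 1"
  shows "\<not> (\<exists>f\<in>S. rank f = r + 1)"
proof
  assume "\<exists>f\<in>S. rank f = r + 1"
  then obtain f where fS: "f \<in> S" and rf: "rank f = r + 1" by blast
  have finS: "finite S" by (rule finite_subset[of _ UNIV]) auto
  have comp: "\<And>s t. s \<in> S \<Longrightarrow> t \<in> S \<Longrightarrow> s \<circ> t \<in> S"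
    using assms(1) unfolding transformation_semigroup_def by blast
  have low: "\<And>s. s \<in> S \<Longrightarrow> r \<le> rank s" using assms(5) finS by simp
  have idG: "id \<in> G" using assms(3) unfolding permutation_group_def by blast
  have "r \<in> rank ` S" using assms(5) finS idG assms(2) by (metis Min_in empty_iff finite_imageI image_is_empty subsetD)
  then obtain a where aS: "a \<in> S" and ra: "rank a = r" by blast
  define B where "B = range f"
  have cB: "card B = r + 1" using rf unfolding B_def by (simp add: rank_def)
  have key: "\<And>h. h \<in> S \<Longrightarrow> range h \<subseteq> B \<Longrightarrow> card (range h) = r \<Longrightarrow>
      \<forall>q\<in>S. rank q = r \<longrightarrow> q ` range h = range q \<and> inj_on q (range h)"
  proof (intro ballI impI)
    fix h q assume hS: "h \<in> S" and hB: "range h \<subseteq> B" and ch: "card (range h) = r"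
      and qS: "q \<in> S" and rq: "rank q = r"
    have "r \<le> card (q ` range h)" using low[OF comp[OF qS hS]] rank_comp by metis
    moreover have "card (q ` range h) \<le> card (range h)" by (rule card_image_le) simp
    ultimately have c1: "card (q ` range h) = card (range h)" using ch by simp
    have "q ` range h \<subseteq> range q" by auto
    moreover have "card (range q) = card (q ` range h)" using c1 ch rq by (simp add: rank_def)
    ultimately have "q ` range h = range q" using card_subset_eq by (metis finite)
    moreover have "inj_on q (range h)" using c1 by (simp add: eq_card_imp_inj_on)
    ultimately show "q ` range h = range q \<and> inj_on q (range h)" by blast
  qed
  have rng: "\<And>g. g \<in> S \<Longrightarrow> range (f \<circ> g \<circ> a) \<subseteq> B \<and> card (range (f \<circ> g \<circ> a)) = r"
  proof -
    fix g assume gS: "g \<in> S"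
    have hS: "f \<circ> g \<circ> a \<in> S" using comp fS gS aS by blast
    have "r \<le> card (range (f \<circ> g \<circ> a))" using low[OF hS] by (simp add: rank_def)
    moreover have "card (range (f \<circ> g \<circ> a)) \<le> card (range a)"
      by (metis card_image_le finite image_comp)
    ultimately show "range (f \<circ> g \<circ> a) \<subseteq> B \<and> card (range (f \<circ> g \<circ> a)) = r"
      using ra B_def by (auto simp: rank_def)
  qed
  define E1 where "E1 = range (f \<circ> id \<circ> a)"
  have E1: "E1 \<subseteq> B" "card E1 = r" using rng[of id] idG assms(2) E1_def by auto
  have "card E1 < card B" using E1 cB by simp
  then obtain b where bB: "b \<in> B" and bE1: "b \<notin> E1" using card_mono[of E1 B] finite[of E1] by (metis not_le subsetI)
  obtain y where yb: "f y = b" using bB B_def by auto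
  obtain g where gG: "g \<in> G" and gy: "g (a y) = y"
    using assms(4) unfolding primitive_def transitive_group_def by blast
  define E2 where "E2 = range (f \<circ> g \<circ> a)"
  have gS: "g \<in> S" using gG assms(2) by blast
  have E2: "E2 \<subseteq> B" "card E2 = r" using rng[OF gS] E2_def by auto
  have bE2: "b \<in> E2" unfolding E2_def using gy yb by (metis comp_apply rangeI)
  have "card E2 < card B" using E2 cB by simp
  then obtain b' where b'B: "b' \<in> B" and b'E2: "b' \<notin> E2" using card_mono[of E2 B] finite[of E2] by (metis not_le subsetI)
  have E2eq: "E2 = B - {b'}"
  proof -
    have "E2 \<subseteq> B - {b'}" using E2(1) b'E2 by auto
    moreover have "card (B - {b'}) = r" using cB b'B by simp
    ultimately show ?thesis using E2(2) card_subset_eq by (metis finite)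
  qed
  have bb': "b \<noteq> b'" using bE2 b'E2 by blast
  have h1S: "f \<circ> id \<circ> a \<in> S" using comp fS aS idG assms(2) by blast
  have h2S: "f \<circ> g \<circ> a \<in> S" using comp fS aS gS by blast
  have qbb: "\<And>q. q \<in> S \<Longrightarrow> rank q = r \<Longrightarrow> q b = q b'"
  proof -
    fix q assume qS: "q \<in> S" and rq: "rank q = r"
    have k1: "q ` E1 = range q" using key[OF h1S] E1 qS rq E1_def by blast
    have k2: "inj_on q E2" using key[OF h2S] E2 qS rq E2_def by blast
    have "q b \<in> q ` E1" using k1 by auto
    then obtain c where cE1: "c \<in> E1" and qc: "q b = q c" by blast
    have "c \<noteq> b" using cE1 bE1 by blast
    show "q b = q b'"
    proof (rule ccontr)
      assume "q b \<noteq> q b'"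
      then have "c \<noteq> b'" using qc by blast
      then have "c \<in> E2" using cE1 E1(1) E2eq by blast
      then have "c = b" using k2 bE2 qc by (metis inj_on_def)
      then show False using \<open>c \<noteq> b\<close> by blast
    qed
  qed
  define R where "R = {(x, y). \<forall>q\<in>S. rank q = r \<longrightarrow> q x = q y}"
  have eqR: "equiv UNIV R" unfolding R_def equiv_def refl_on_def sym_def trans_def by auto
  have prR: "preserves G R" unfolding preserves_def
  proof (intro ballI allI impI)
    fix g x y assume gG: "g \<in> G" and xy: "(x, y) \<in> R"
    have "bij g" using gG assms(3) unfolding permutation_group_def by blast
    then have sg: "range g = UNIV" by (simp add: bij_is_surj)
    have "\<forall>q\<in>S. rank q = r \<longrightarrow> q (g x) = q (g y)"
    proof (intro ballI impI)
      fix q assume qS: "q \<in> S" and rq: "rank q = r"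
      have "q \<circ> g \<in> S" using comp qS gG assms(2) by blast
      moreover have "rank (q \<circ> g) = r" using rq rank_comp sg rank_def by metis
      ultimately show "q (g x) = q (g y)" using xy unfolding R_def by auto
    qed
    then show "(g x, g y) \<in> R" unfolding R_def by simp
  qed
  have "R = Id \<or> R = UNIV" using assms(4) eqR prR unfolding primitive_def by blast
  moreover have "(b, b') \<in> R" using qbb R_def by auto
  ultimately have RU: "R = UNIV" using bb' by blast
  have "\<And>x. a x = a y" using RU aS ra unfolding R_def by blast
  then have "range a = {a y}" by auto
  then have "rank a = 1" by (simp add: rank_def)
  then show False using ra assms(6) by simp
qed

end
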